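(* Let $n\ge4$, let $C=\mathrm{circ}(1,0,\ldots,0,-1)$ of order $n-1$, let $X=(CC^T+I_{n-1})^{-1}(J_{n-1}-nI_{n-1})$ and $Y=-C^TX$. Then $Y=\mathrm{circ}(d_0,d_1,\ldots,d_{n-2})$ where \[d_0=\frac{2n}{\sqrt{5}}\left[\frac{(3+\sqrt{5})^{n-2}-2^{n-2}}{2^{n-1}-(3+\sqrt{5})^{n-1}} -\frac{(3-\sqrt{5})^{n-2}-2^{n-2}}{2^{n-1}-(3-\sqrt{5})^{n-1}}\right]\] and for $j=1,2,\ldots,n-2$, \[d_j=-\frac{n2^{n-j}}{5+\sqrt{5}}\left[\frac{(3+\sqrt{5})^{j}}{2^{n-1}-(3+\sqrt{5})^{n-1}} +\frac{2(3-\sqrt{5})^{j-1}}{2^{n-1}-(3-\sqrt{5})^{n-1}}\right].\]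
   Context: For $c_0,\dots,c_{k-1}$, $\mathrm{circ}(c_0,\ldots,c_{k-1})$ denotes the $k\times k$ circulant matrix whose $(i,j)$-entry is $c_{(j-i)\bmod k}$. $J_{n-1}$ is the $(n-1)\times(n-1)$ all-ones matrix and $I_{n-1}$ the identity. Note $CC^T+I_{n-1}=\mathrm{circ}(3,-1,0,\ldots,0,-1)$ is invertible. ($X,Y$ are blocks of the Moore–Penrose inverse of the oriented incidence matrix of the wheel graph $W_n$.) *)

theory Defs
  imports Complex_Main "Jordan_Normal_Form.Matrix"
begin

definition circ_mat :: "nat \<Rightarrow> (nat \<Rightarrow> 'a) \<Rightarrow> 'a mat" where
  "circ_mat k c = mat k k (\<lambda>(i, j). c ((j + k - i) mod k))"

definition mat_inv :: "'a :: semiring_1 mat \<Rightarrow> 'a mat" where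
  "mat_inv A = (THE B. B \<in> carrier_mat (dim_row A) (dim_row A) \<and>
      A * B = 1\<^sub>m (dim_row A) \<and> B * A = 1\<^sub>m (dim_row A))"

definition ones_mat :: "nat \<Rightarrow> 'a :: one mat" where
  "ones_mat k = mat k k (\<lambda>_. 1)"

end

theory Submission
  imports Defs "Jordan_Normal_Form.Determinant"
begin


lemma mod_lt2: "(x::nat) < 2*k \<Longrightarrow> x mod k = (if x < k then x else x - k)"
proof (cases "x < k")
  case False
  assume "x < 2*k"
  then have "x - k < k" using False by simp
  moreover have "x mod k = (x - k) mod k" using False by (simp add: le_mod_geq)
  ultimately show ?thesis using False by simp
qed simp
lemma m1: "t<k \<Longrightarrow> i<k \<Longrightarrow> ((t + i) mod k + k - i) mod k = (t::nat)"
  by (cases "t+i<k") (auto simp: mod_lt2 ac_simps)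
lemma m2: "t<k \<Longrightarrow> i<k \<Longrightarrow> j<k \<Longrightarrow> (j + k - (t + i) mod k) mod k = ((j + k - i) mod k + k - t) mod (k::nat)"
  by (cases "t+i<k"; cases "i \<le> j") (auto simp: mod_lt2 ac_simps)
lemma m3: "l<k \<Longrightarrow> i<k \<Longrightarrow> ((l + k - i) mod k + i) mod k = (l::nat)"
  by (cases "i \<le> l") (auto simp: mod_lt2 ac_simps)
lemma m4: "l<k \<Longrightarrow> m<k \<Longrightarrow> (m + k - (m + k - l) mod k) mod k = (l::nat)"
  by (cases "l \<le> m") (auto simp: mod_lt2 ac_simps)
lemma m5: "i<k \<Longrightarrow> j<k \<Longrightarrow> (i + k - j) mod k = (k - (j + k - i) mod k) mod (k::nat)"
  by (cases "i \<le> j") (auto simp: mod_lt2 ac_simps)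
lemma m6: assumes "l<k" "i<k" "j<k" shows "((j + k - i) mod k + k - (l + k - i) mod k) mod k = (j + k - l) mod (k::nat)"
proof -
  have t: "(l + k - i) mod k < k" using assms by simp
  show ?thesis using m2[OF t assms(2,3)] m3[OF assms(1,2)] by simp
qed

lemma circ_index[simp]: "i < k \<Longrightarrow> j < k \<Longrightarrow> circ_mat k c $$ (i,j) = c ((j+k-i) mod k)"
  by (simp add: circ_mat_def)

lemma circ_carrier[simp]: "circ_mat k c \<in> carrier_mat k k"
  by (simp add: circ_mat_def)

lemma circ_dims[simp]: "dim_row (circ_mat k c) = k" "dim_col (circ_mat k c) = k"
  by (simp_all add: circ_mat_def)

lemma circ_cong: "(\<And>m. m < k \<Longrightarrow> a m = b m) \<Longrightarrow> circ_mat k a = circ_mat k b"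
  by (rule eq_matI) auto

definition conv :: "nat \<Rightarrow> (nat \<Rightarrow> real) \<Rightarrow> (nat \<Rightarrow> real) \<Rightarrow> nat \<Rightarrow> real" where
  "conv k a b m = (\<Sum>l<k. a l * b ((m + k - l) mod k))"

lemma circ_mult: "circ_mat k a * circ_mat k b = circ_mat k (conv k a b)"
proof (rule eq_matI)
  fix i j assume i: "i < dim_row (circ_mat k (conv k a b))" and j: "j < dim_col (circ_mat k (conv k a b))"
  then have i: "i < k" and j: "j < k" by auto
  have "(circ_mat k a * circ_mat k b) $$ (i,j) = (\<Sum>l\<in>{0..<k}. a ((l+k-i) mod k) * b ((j+k-l) mod k))"
    using i j by (simp add: scalar_prod_def)
  also have "\<dots> = (\<Sum>t\<in>{0..<k}. a t * b (((j+k-i) mod k + k - t) mod k))"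
    by (rule sum.reindex_bij_witness[of _ "\<lambda>t. (t+i) mod k" "\<lambda>l. (l+k-i) mod k"])
       (use i j in \<open>simp_all add: m1 m6 m3\<close>)
  also have "\<dots> = circ_mat k (conv k a b) $$ (i,j)"
    using i j by (simp add: conv_def lessThan_atLeast0)
  finally show "(circ_mat k a * circ_mat k b) $$ (i,j) = circ_mat k (conv k a b) $$ (i,j)" .
qed auto

lemma conv_comm: assumes m: "m < k" shows "conv k a b m = conv k b a m"
  unfolding conv_def
  by (rule sum.reindex_bij_witness[of _ "\<lambda>l. (m+k-l) mod k" "\<lambda>l. (m+k-l) mod k"])
     (use m in \<open>simp_all add: m4 mult.commute\<close>)

lemma circ_comm: "circ_mat k a * circ_mat k (b::nat\<Rightarrow>real) = circ_mat k b * circ_mat k a"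
  unfolding circ_mult by (rule circ_cong) (rule conv_comm)

lemma conv_sparse: assumes "S \<subseteq> {..<k}" "\<And>l. l < k \<Longrightarrow> l \<notin> S \<Longrightarrow> a l = 0"
  shows "conv k a b m = (\<Sum>l\<in>S. a l * b ((m + k - l) mod k))"
  unfolding conv_def
  by (rule sym, rule sum.mono_neutral_left) (use assms in auto)

lemma circ_transpose: "transpose_mat (circ_mat k a) = circ_mat k (\<lambda>m. a ((k - m) mod k))"
proof (rule eq_matI)
  fix i j assume "i < dim_row (circ_mat k (\<lambda>m. a ((k - m) mod k)))" "j < dim_col (circ_mat k (\<lambda>m. a ((k - m) mod k)))"
  then have i: "i < k" and j: "j < k" by auto
  have "transpose_mat (circ_mat k a) $$ (i, j) = a ((i + k - j) mod k)" using i j by simp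
  also have "\<dots> = a ((k - (j + k - i) mod k) mod k)" by (simp only: m5[OF i j])
  also have "\<dots> = circ_mat k (\<lambda>m. a ((k - m) mod k)) $$ (i, j)" using i j by simp
  finally show "transpose_mat (circ_mat k a) $$ (i, j) = circ_mat k (\<lambda>m. a ((k - m) mod k)) $$ (i, j)" .
qed auto

lemma circ_add: "circ_mat k a + circ_mat k b = circ_mat k (\<lambda>m. a m + b m)"
  by (rule eq_matI) auto

lemma circ_minus: "circ_mat k a - circ_mat k b = circ_mat k (\<lambda>m. a m - b m)"
  by (rule eq_matI) auto

lemma circ_uminus: "- circ_mat k a = circ_mat k (\<lambda>m. - a m)"
  by (rule eq_matI) auto

lemma circ_smult: "x \<cdot>\<^sub>m circ_mat k a = circ_mat k (\<lambda>m. x * a m)"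
  by (rule eq_matI) auto

lemma mod0_iff: assumes "i < k" "j < k" shows "((j + k - i) mod k = 0) = (i = (j::nat))"
proof (cases "i \<le> j")
  case True
  then have "(j + k - i) mod k = j - i" using assms by (simp add: mod_lt2)
  then show ?thesis using True by auto
next
  case False
  then have "(j + k - i) mod k = j + k - i" using assms by (simp add: mod_lt2)
  then show ?thesis using False assms by auto
qed

lemma circ_one: "1\<^sub>m k = (circ_mat k (\<lambda>m. if m = 0 then 1 else 0) :: real mat)"
  by (rule eq_matI) (auto simp: mod0_iff)

lemma circ_ones: "ones_mat k = (circ_mat k (\<lambda>m. 1) :: real mat)"
  by (rule eq_matI) (auto simp: ones_mat_def)



definition aa :: real where "aa = (3 + sqrt 5) / 2"
definition bb :: real where "bb = (3 - sqrt 5) / 2"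

definition ff :: "real \<Rightarrow> nat \<Rightarrow> nat \<Rightarrow> real" where
  "ff x k j = - (2 * x / (5 + sqrt 5)) * (aa ^ j / (1 - aa ^ k) + aa * bb ^ j / (1 - bb ^ k))"

definition dd :: "nat \<Rightarrow> nat \<Rightarrow> real" where
  "dd n = (\<lambda>j::nat.
     if j = 0 then
       2 * real n / sqrt 5 *
         (((3 + sqrt 5) ^ (n - 2) - 2 ^ (n - 2)) / (2 ^ (n - 1) - (3 + sqrt 5) ^ (n - 1))
        - ((3 - sqrt 5) ^ (n - 2) - 2 ^ (n - 2)) / (2 ^ (n - 1) - (3 - sqrt 5) ^ (n - 1)))
     else
       - (real n * 2 ^ (n - j) / (5 + sqrt 5)) *
         ((3 + sqrt 5) ^ j / (2 ^ (n - 1) - (3 + sqrt 5) ^ (n - 1))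
        + 2 * (3 - sqrt 5) ^ (j - 1) / (2 ^ (n - 1) - (3 - sqrt 5) ^ (n - 1))))"

lemma s5: "sqrt 5 * sqrt 5 = (5::real)" by simp
lemma s_pos: "sqrt 5 > (0::real)" by simp
lemma s_gt1: "sqrt 5 > (1::real)"
proof -
  have "sqrt 1 < sqrt (5::real)" by (simp only: real_sqrt_less_iff)
  then show ?thesis by simp
qed
lemma s_lt3: "sqrt 5 < (3::real)"
proof -
  have "sqrt 5 < sqrt ((3::real)^2)" by (simp only: real_sqrt_less_iff) simp
  then show ?thesis by simp
qed

lemma r_nz: "5 + sqrt 5 \<noteq> (0::real)" using s_pos by linarith

lemma ab: "aa * bb = 1" "aa + bb = 3" "aa - bb = sqrt 5"
  unfolding aa_def bb_def using s5 by (auto simp: field_simps)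
lemma a_gt1: "aa > 1"
proof -
  have "2 < 3 + sqrt 5" using s_pos by linarith
  then show ?thesis by (simp add: aa_def)
qed
lemma b_pos: "bb > 0" unfolding bb_def using s_lt3 by simp
lemma b_lt1: "bb < 1" unfolding bb_def using s_gt1 by simp
lemma a_sq: "aa^2 = 3*aa - 1"
proof -
  have "3 - bb = aa" using ab(2) by linarith
  then have "aa*aa = aa*(3 - bb)" by simp
  also have "\<dots> = 3*aa - 1" using ab(1) by (simp add: algebra_simps)
  finally show ?thesis by (simp add: power2_eq_square)
qed
lemma b_sq: "bb^2 = 3*bb - 1"
proof -
  have "3 - aa = bb" using ab(2) by linarith
  then have "bb*bb = bb*(3 - aa)" by simp
  also have "\<dots> = 3*bb - 1" using ab(1) by (simp add: algebra_simps)
  finally show ?thesis by (simp add: power2_eq_square)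
qed

lemma pow_rec: assumes "y^2 = 3*y - (1::real)" shows "3*y^(m+1) - y^m - y^(m+2) = 0"
proof -
  have "y^(m+2) = y^m * y^2" by (rule power_add)
  also have "\<dots> = y^m * (3*y - 1)" using assms by simp
  finally have e: "y^(m+2) = y^m * (3*y - 1)" .
  have e2: "y^(m+1) = y^m * y" by simp
  show ?thesis unfolding e e2 by (simp add: algebra_simps)
qed

lemma den_a: "k \<ge> 1 \<Longrightarrow> 1 - aa^k \<noteq> 0"
  using one_less_power[OF a_gt1, of k] by simp
lemma den_b: assumes "k \<ge> 1" shows "1 - bb^k \<noteq> 0"
proof -
  have "bb^k \<le> bb^1" by (rule power_decreasing) (use assms b_pos b_lt1 in auto)
  then show ?thesis using b_lt1 by simp
qed

lemma ff_rec: "3 * ff x k (m+1) - ff x k m - ff x k (m+2) = 0"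
proof -
  define K where "K = - (2 * x / (5 + sqrt 5))"
  define c1 where "c1 = 1 / (1 - aa ^ k)"
  define c2 where "c2 = 1 / (1 - bb ^ k)"
  have f: "ff x k j = K * (aa^j * c1 + aa * bb^j * c2)" for j
    unfolding ff_def K_def c1_def c2_def by simp
  have "3 * ff x k (m+1) - ff x k m - ff x k (m+2) =
        K * (c1 * (3*aa^(m+1) - aa^m - aa^(m+2)) + aa * c2 * (3*bb^(m+1) - bb^m - bb^(m+2)))"
    unfolding f by (simp add: algebra_simps)
  also have "\<dots> = 0" using pow_rec[OF a_sq] pow_rec[OF b_sq] by simp
  finally show ?thesis .
qed

lemma gen3: fixes X Y x a b r u v :: real
  assumes "u = 1 - X" "u \<noteq> 0" "v = 1 - Y" "v \<noteq> 0" "r = 5 + s" "r \<noteq> 0" "a + b = 3" "a - b = s"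
  shows "- (2 * x / r) * (X / u + a * Y / v) - (- (2 * x / r) * (1 / u + a * 1 / v)) = x"
  using assms(2,4,6) apply (simp add: field_simps)
  using assms(1,3,5,7,8) by (Groebner_Basis.algebra)

lemma ff_L3: assumes "k \<ge> 1" shows "ff x k k - ff x k 0 = x"
  unfolding ff_def power_0
  by (rule gen3[OF refl den_a[OF assms] refl den_b[OF assms] refl _ ab(2) ab(3)]) (rule r_nz)

lemma gen5: fixes X Y x a b r u v :: real
  assumes "u = 1 - X" "u \<noteq> 0" "v = 1 - Y" "v \<noteq> 0" "r = 5 + s" "r \<noteq> 0" "a + b = 3" "a - b = s" "a*b = 1"
  shows "- (2 * x / r) * (a*X / u + a * (b*Y) / v) - (- (2 * x / r) * (a / u + a * b / v)) = x"
  using assms(2,4,6) apply (simp add: field_simps)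
  using assms(1,3,5,7,8,9) by (Groebner_Basis.algebra)

lemma ff_L5: assumes "k \<ge> 1" shows "ff x k (k+1) - ff x k 1 = x"
  unfolding ff_def Suc_eq_plus1[symmetric] power_Suc power_one_right
  by (rule gen5[OF refl den_a[OF assms] refl den_b[OF assms] refl _ ab(2) ab(3) ab(1)]) (rule r_nz)

lemma core0:
  fixes s P Q a b x u v r :: real
  assumes s2: "s*s = 5" and s: "s \<noteq> 0" and PQ: "P*Q = 1" and ab: "a*b = 1" "a + b = 3" "a - b = s"
    and u: "u = 1 - P*a" "u \<noteq> 0" and v: "v = 1 - Q*b" "v \<noteq> 0" and r: "r = 5 + s" "r \<noteq> 0"
  shows "2 * x / s * ((P - 1) / (2*u) - (Q - 1) / (2*v))
       = - (2 * x / r) * (P*a / u + a * (Q*b) / v)"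
proof -
  show ?thesis using u(2) v(2) r(2) s
    apply (simp add: field_simps)
    using s2 PQ ab u(1) v(1) r(1) by (Groebner_Basis.algebra)
qed

lemma conv_j: fixes x p q q1 r K A B u v :: real
  assumes "K \<noteq> 0" "u \<noteq> 0" "v \<noteq> 0" "r \<noteq> 0" "p*q = 2*K" "p*q1 = K"
  shows "-(x*p/r)*((q*A)/(K*u) + 2*(q1*B)/(K*v)) = -(2*x/r)*(A/u + B/v)"
  using assms(1-4) apply (simp add: field_simps)
  using assms(5,6) by (Groebner_Basis.algebra)

lemma two_a: "3 + sqrt 5 = 2 * aa" by (simp add: aa_def)
lemma two_b: "3 - sqrt 5 = 2 * bb" by (simp add: bb_def)

lemma dd_j: assumes n: "n \<ge> 4" and j: "1 \<le> j" "j \<le> n - 2"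
  shows "dd n j = ff (real n) (n-1) j"
proof -
  have jn: "j \<noteq> 0" using j by simp
  let ?K = "(2::real)^(n-1)"
  have e1: "(3+sqrt 5)^j = 2^j*aa^j" unfolding two_a by (simp add: power_mult_distrib)
  have e2: "(3+sqrt 5)^(n-1) = ?K*aa^(n-1)" unfolding two_a by (simp add: power_mult_distrib)
  have e3: "(3-sqrt 5)^(j-1) = 2^(j-1)*bb^(j-1)" unfolding two_b by (simp add: power_mult_distrib)
  have e4: "(3-sqrt 5)^(n-1) = ?K*bb^(n-1)" unfolding two_b by (simp add: power_mult_distrib)
  have "n - j + j = (n-1) + 1" using n j by simp
  then have "(2::real)^(n-j) * 2^j = 2^((n-1)+1)" by (metis power_add)
  then have p1: "(2::real)^(n-j) * 2^j = 2*?K" by simp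
  have "n - j + (j - 1) = n-1" using n j by simp
  then have p2: "(2::real)^(n-j) * 2^(j-1) = ?K" by (metis power_add)
  have "bb^j = bb * bb^(j-1)" using j by (metis Suc_diff_le diff_Suc_1 power_Suc)
  then have hb: "bb^(j-1) = aa * bb^j" using ab(1) by (simp add: mult.assoc[symmetric])
  have k1: "n - 1 \<ge> 1" using n by simp
  have dA: "?K - ?K*aa^(n-1) = ?K*(1 - aa^(n-1))" by (simp add: algebra_simps)
  have dB: "?K - ?K*bb^(n-1) = ?K*(1 - bb^(n-1))" by (simp add: algebra_simps)
  have "dd n j = - (real n * 2 ^ (n - j) / (5 + sqrt 5)) *
         ((2^j*aa^j) / (?K*(1 - aa^(n-1))) + 2 * (2^(j-1)*bb^(j-1)) / (?K*(1 - bb^(n-1))))"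
    unfolding dd_def if_not_P[OF jn] e1 e2 e3 e4 dA dB ..
  also have "\<dots> = -(2*real n/(5 + sqrt 5))*(aa^j/(1 - aa^(n-1)) + bb^(j-1)/(1 - bb^(n-1)))"
    by (rule conv_j) (use p1 p2 den_a[OF k1] den_b[OF k1] r_nz in auto)
  also have "\<dots> = ff (real n) (n-1) j" unfolding ff_def hb ..
  finally show ?thesis .
qed

lemma frac_T: "(T::real) \<noteq> 0 \<Longrightarrow> (T*P - T)/(2*T - 2*T*(P*a)) = (P-1)/(2*(1-P*a))"
proof -
  assume T: "T \<noteq> 0"
  have "T*P - T = T*(P-1)" "2*T - 2*T*(P*a) = T*(2*(1-P*a))" by (simp_all add: algebra_simps)
  then show ?thesis using T by simp
qed

lemma dd_0: assumes n: "n \<ge> 4" shows "dd n 0 = ff (real n) (n-1) (n-1)"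
proof -
  let ?T = "(2::real)^(n-2)"
  define P where "P = aa^(n-2)"
  define Q where "Q = bb^(n-2)"
  have nn: "n - 1 = Suc (n-2)" using n by simp
  have K: "(2::real)^(n-1) = 2*?T" unfolding nn by simp
  have aP: "aa^(n-1) = P*aa" unfolding nn P_def by simp
  have bQ: "bb^(n-1) = Q*bb" unfolding nn Q_def by simp
  have e1: "(3+sqrt 5)^(n-2) = ?T*P" unfolding two_a P_def by (simp add: power_mult_distrib)
  have e2: "(3+sqrt 5)^(n-1) = 2*?T*(P*aa)" unfolding two_a aP[symmetric] K[symmetric] by (simp add: power_mult_distrib)
  have e3: "(3-sqrt 5)^(n-2) = ?T*Q" unfolding two_b Q_def by (simp add: power_mult_distrib)
  have e4: "(3-sqrt 5)^(n-1) = 2*?T*(Q*bb)" unfolding two_b bQ[symmetric] K[symmetric] by (simp add: power_mult_distrib)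
  have T0: "?T \<noteq> 0" by simp
  have PQ: "P*Q = 1" unfolding P_def Q_def power_mult_distrib[symmetric] ab(1) by simp
  have k1: "n - 1 \<ge> 1" using n by simp
  have u: "1 - P*aa \<noteq> 0" using den_a[OF k1] aP by simp
  have v: "1 - Q*bb \<noteq> 0" using den_b[OF k1] bQ by simp
  have "dd n 0 = 2 * real n / sqrt 5 * ((?T*P - ?T) / (2*?T - 2*?T*(P*aa)) - (?T*Q - ?T) / (2*?T - 2*?T*(Q*bb)))"
    unfolding dd_def if_P[OF refl] e1 e2 e3 e4 K ..
  also have "\<dots> = 2 * real n / sqrt 5 * ((P - 1) / (2*(1 - P*aa)) - (Q - 1) / (2*(1 - Q*bb)))"
    unfolding frac_T[OF T0] ..
  also have "\<dots> = - (2 * real n / (5 + sqrt 5)) * (P*aa / (1 - P*aa) + aa * (Q*bb) / (1 - Q*bb))"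
    by (rule core0[OF s5 _ PQ ab refl u refl v refl r_nz]) (use s_pos in simp)
  also have "\<dots> = ff (real n) (n-1) (n-1)" unfolding ff_def aP bQ ..
  finally show ?thesis .
qed



lemma dd_rec: assumes n: "n \<ge> 4" and k: "k = n - 1" and m: "m < k"
  shows "3 * dd n m - dd n ((m + k - 1) mod k) - dd n ((m + 1) mod k)
         = real n * (if m = 0 then 1 else if m = 1 then -1 else 0)"
proof -
  define f where "f = ff (real n) k"
  have k3: "k \<ge> 3" using n k by simp
  have dj: "dd n j = f j" if "1 \<le> j" "j \<le> k - 1" for j
    unfolding f_def k using dd_j[OF n that(1)] that(2) k by simp
  have d0: "dd n 0 = f k" unfolding f_def k using dd_0[OF n] .
  have L3: "f k - f 0 = real n" unfolding f_def using ff_L3 k3 by simp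
  have L5: "f (k+1) - f 1 = real n" unfolding f_def using ff_L5 k3 by simp
  have rec: "3 * f (i+1) - f i - f (i+2) = 0" for i unfolding f_def by (rule ff_rec)
  consider "m = 0" | "m = 1" | "m = k - 1" | "2 \<le> m" "m \<le> k - 2" using m k3 by linarith
  then show ?thesis
  proof cases
    case 1
    have a: "(m + k - 1) mod k = k - 1" using 1 k3 by simp
    have b: "(m + 1) mod k = 1" using 1 k3 by simp
    have r: "3 * f k - f (k-1) - f (k+1) = 0" using rec[of "k-1"] k3
      by (simp add: Suc_diff_le numeral_2_eq_2 )
    show ?thesis unfolding a b using 1 d0 dj[of "k-1"] dj[of 1] k3 r L5 by simp
  next
    case 2
    have a: "(m + k - 1) mod k = 0" using 2 k3 by simp
    have b: "(m + 1) mod k = 2" using 2 k3 by simp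
    have r: "3 * f 1 - f 0 - f 2 = 0" using rec[of 0] by (simp add: numeral_2_eq_2)
    show ?thesis unfolding a b using 2 d0 dj[of 2] dj[of 1] k3 r L3 by simp
  next
    case 3
    have a: "(m + k - 1) mod k = k - 2" using 3 k3 by (simp add: mod_lt2)
    have b: "(m + 1) mod k = 0" using 3 k3 by simp
    have i1: "k - 2 + 1 = k - 1" "k - 2 + 2 = k" using k3 by auto
    have r: "3 * f (k-1) - f (k-2) - f k = 0" using rec[of "k-2"] unfolding i1 .
    show ?thesis unfolding a b using 3 d0 dj[of "k-1"] dj[of "k-2"] k3 r by simp
  next
    case 4
    have a: "(m + k - 1) mod k = m - 1" using 4 k3 by (simp add: mod_lt2)
    have b: "(m + 1) mod k = m + 1" using 4 k3 by simp
    have r: "3 * f m - f (m-1) - f (m+1) = 0" using rec[of "m-1"] 4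
      by (simp add: Suc_diff_le numeral_2_eq_2 )
    show ?thesis unfolding a b using 4 dj[of "m-1"] dj[of m] dj[of "m+1"] k3 r by simp
  qed
qed


lemma sp_pos: assumes v: "(v :: real vec) \<in> carrier_vec k" "v \<noteq> 0\<^sub>v k" shows "v \<bullet> v > 0"
proof -
  obtain i where i: "i < k" "v $ i \<noteq> 0" using v by (metis eq_vecI carrier_vecD index_zero_vec(1) index_zero_vec(2))
  have "v \<bullet> v = (\<Sum>j\<in>{0..<k}. v $ j * v $ j)" using v by (simp add: scalar_prod_def)
  also have "\<dots> > 0" by (rule sum_pos2[of _ i]) (use i in \<open>auto simp: zero_less_mult_iff\<close>)
  finally show ?thesis .
qed

lemma sp_nonneg: "(w :: real vec) \<bullet> w \<ge> 0"
  unfolding scalar_prod_def by (rule sum_nonneg) simp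

lemma posdef_det: assumes C: "(C :: real mat) \<in> carrier_mat k k"
  shows "det (C * transpose_mat C + 1\<^sub>m k) \<noteq> 0"
proof
  let ?M = "C * transpose_mat C + 1\<^sub>m k"
  have M: "?M \<in> carrier_mat k k" using C by simp
  assume "det ?M = 0"
  then obtain v where v: "v \<in> carrier_vec k" "v \<noteq> 0\<^sub>v k" "?M *\<^sub>v v = 0\<^sub>v k"
    using det_0_iff_vec_prod_zero[OF M] by auto
  define w where "w = transpose_mat C *\<^sub>v v"
  have w: "w \<in> carrier_vec k" unfolding w_def using C v by simp
  have "?M *\<^sub>v v = (C * transpose_mat C) *\<^sub>v v + 1\<^sub>m k *\<^sub>v v"
    by (rule add_mult_distrib_mat_vec) (use C v in auto)
  also have "(C * transpose_mat C) *\<^sub>v v = C *\<^sub>v w"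
    unfolding w_def by (rule assoc_mult_mat_vec) (use C v in auto)
  also have "1\<^sub>m k *\<^sub>v v = v" using v by simp
  finally have Mv: "?M *\<^sub>v v = C *\<^sub>v w + v" .
  have z: "C *\<^sub>v w + v = 0\<^sub>v k" using v(3) unfolding Mv .
  have "0 = v \<bullet> (C *\<^sub>v w + v)" unfolding z using v(1) by simp
  also have "\<dots> = v \<bullet> (C *\<^sub>v w) + v \<bullet> v"
    by (rule scalar_prod_add_distrib) (use v w C in auto)
  also have "v \<bullet> (C *\<^sub>v w) = w \<bullet> w"
    unfolding w_def by (rule transpose_vec_mult_scalar[symmetric]) (use C v w w_def in auto)
  finally have "0 = w \<bullet> w + v \<bullet> v" .
  then show False using sp_pos[OF v(1,2)] sp_nonneg[of w] by linarith
qed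

theorem mainTheorem9:
  fixes n :: nat
  assumes "n \<ge> 4"
  defines "C \<equiv> circ_mat (n - 1)
             (\<lambda>i. if i = 0 then 1 else if i = n - 2 then -1 else (0::real))"
  defines "X \<equiv> mat_inv (C * transpose_mat C + 1\<^sub>m (n - 1))
             * (ones_mat (n - 1) - of_nat n \<cdot>\<^sub>m 1\<^sub>m (n - 1))"
  defines "Y \<equiv> - (transpose_mat C * X)"
  defines "d \<equiv> (\<lambda>j::nat.
     if j = 0 then
       2 * real n / sqrt 5 *
         (((3 + sqrt 5) ^ (n - 2) - 2 ^ (n - 2)) / (2 ^ (n - 1) - (3 + sqrt 5) ^ (n - 1))
        - ((3 - sqrt 5) ^ (n - 2) - 2 ^ (n - 2)) / (2 ^ (n - 1) - (3 - sqrt 5) ^ (n - 1)))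
     else
       - (real n * 2 ^ (n - j) / (5 + sqrt 5)) *
         ((3 + sqrt 5) ^ j / (2 ^ (n - 1) - (3 + sqrt 5) ^ (n - 1))
        + 2 * (3 - sqrt 5) ^ (j - 1) / (2 ^ (n - 1) - (3 - sqrt 5) ^ (n - 1))))"
  shows "Y = circ_mat (n - 1) d"
proof -
  note n = assms(1)
  define k where "k = n - 1"
  have k3: "k \<ge> 3" using n k_def by simp
  have nk: "n - 2 = k - 1" using k_def by simp
  have dd: "d = dd n" unfolding d_def dd_def ..
  define c where "c = (\<lambda>i. if i = 0 then 1 else if i = k - 1 then -1 else (0::real))"
  have Cc: "C = circ_mat k c" unfolding C_def c_def k_def nk[unfolded k_def] ..
  define ct0 where "ct0 = (\<lambda>m::nat. if m = 0 then 1 else if m = 1 then -1 else (0::real))"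
  define m0 where "m0 = (\<lambda>m::nat. if m = 0 then 3 else if m = 1 \<or> m = k - 1 then -1 else (0::real))"
  define w where "w = (\<lambda>m::nat. if m = 0 then 1 - real n else 1)"
  have Ct: "transpose_mat C = circ_mat k ct0"
    unfolding Cc circ_transpose
  proof (rule circ_cong)
    fix m assume m: "m < k"
    show "c ((k - m) mod k) = ct0 m"
    proof (cases "m = 0")
      case True then show ?thesis by (simp add: c_def ct0_def)
    next
      case False
      then have "(k - m) mod k = k - m" using m by simp
      then show ?thesis using False m k3 by (auto simp: c_def ct0_def)
    qed
  qed
  have Mc: "C * transpose_mat C + 1\<^sub>m k = circ_mat k m0"
    unfolding Ct unfolding Cc circ_mult circ_one circ_add
  proof (rule circ_cong)
    fix m assume m: "m < k"
    have "conv k c ct0 m = (\<Sum>l\<in>{0, k-1}. c l * ct0 ((m + k - l) mod k))"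
      by (rule conv_sparse) (use k3 in \<open>auto simp: c_def\<close>)
    also have "\<dots> = ct0 m - ct0 ((m + 1) mod k)"
      using k3 m by (simp add: c_def)
    finally have cv: "conv k c ct0 m = ct0 m - ct0 ((m + 1) mod k)" .
    consider "m = 0" | "m = 1" | "m = k - 1" | "2 \<le> m" "m < k - 1" using m k3 by linarith
    then show "conv k c ct0 m + (if m = 0 then 1 else 0) = m0 m"
    proof cases
      case 1 then show ?thesis unfolding cv using k3 by (simp add: ct0_def m0_def)
    next
      case 2 then show ?thesis unfolding cv using k3 by (simp add: ct0_def m0_def)
    next
      case 3
      then have "(m + 1) mod k = 0" using k3 by simp
      then show ?thesis unfolding cv using k3 3 by (simp add: ct0_def m0_def)
    next
      case 4
      then have "(m + 1) mod k = m + 1" by simp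
      then show ?thesis unfolding cv using 4 by (simp add: ct0_def m0_def)
    qed
  qed
  have Wc: "ones_mat k - real n \<cdot>\<^sub>m 1\<^sub>m k = circ_mat k w"
    unfolding circ_ones circ_one circ_smult circ_minus by (rule circ_cong) (simp add: w_def)
  have CtW: "circ_mat k ct0 * circ_mat k w = circ_mat k (\<lambda>m. - real n * ct0 m)"
    unfolding circ_mult
  proof (rule circ_cong)
    fix m assume m: "m < k"
    have "conv k ct0 w m = (\<Sum>l\<in>{0, 1}. ct0 l * w ((m + k - l) mod k))"
      by (rule conv_sparse) (use k3 in \<open>auto simp: ct0_def\<close>)
    also have "\<dots> = w m - w ((m + k - 1) mod k)"
      using k3 m by (simp add: ct0_def)
    finally have cv: "conv k ct0 w m = w m - w ((m + k - 1) mod k)" .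
    consider "m = 0" | "m = 1" | "2 \<le> m" using m k3 by linarith
    then show "conv k ct0 w m = - real n * ct0 m"
    proof cases
      case 1 then show ?thesis unfolding cv using k3 by (simp add: ct0_def w_def)
    next
      case 2 then show ?thesis unfolding cv using k3 by (simp add: ct0_def w_def)
    next
      case 3
      then have "(m + k - 1) mod k = m - 1" using m by (simp add: mod_lt2)
      then show ?thesis unfolding cv using 3 by (simp add: ct0_def w_def)
    qed
  qed
  have MD: "circ_mat k m0 * circ_mat k (\<lambda>m. - dd n m) = circ_mat k (\<lambda>m. - real n * ct0 m)"
    unfolding circ_mult
  proof (rule circ_cong)
    fix m assume m: "m < k"
    have "conv k m0 (\<lambda>m. - dd n m) m = (\<Sum>l\<in>{0, 1, k-1}. m0 l * - dd n ((m + k - l) mod k))"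
      by (rule conv_sparse) (use k3 in \<open>auto simp: m0_def\<close>)
    also have "\<dots> = - (3 * dd n m - dd n ((m + k - 1) mod k) - dd n ((m + 1) mod k))"
      using k3 m by (simp add: m0_def)
    also have "\<dots> = - real n * ct0 m"
      unfolding dd_rec[OF n k_def m] by (simp add: ct0_def)
    finally show "conv k m0 (\<lambda>m. - dd n m) m = - real n * ct0 m" .
  qed
  have comm: "circ_mat k ct0 * circ_mat k m0 = circ_mat k m0 * circ_mat k ct0"
    by (rule circ_comm)
  let ?M = "C * transpose_mat C + 1\<^sub>m k"
  have Ccar: "C \<in> carrier_mat k k" unfolding Cc by simp
  have detM: "det ?M \<noteq> 0" by (rule posdef_det[OF Ccar])
  have Mcar: "?M \<in> carrier_mat k k" using Ccar by simp
  have "?M \<in> Units (ring_mat TYPE(real) k ())"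
    by (rule det_non_zero_imp_unit[OF Mcar detM])
  then obtain B where B: "B \<in> carrier_mat k k" "B * ?M = 1\<^sub>m k" "?M * B = 1\<^sub>m k"
    unfolding Units_def ring_mat_def by auto
  have inv: "mat_inv ?M = B"
    unfolding mat_inv_def
  proof (rule the_equality)
    show "B \<in> carrier_mat (dim_row ?M) (dim_row ?M) \<and> ?M * B = 1\<^sub>m (dim_row ?M) \<and> B * ?M = 1\<^sub>m (dim_row ?M)"
      using B Mcar by simp
  next
    fix B' assume "B' \<in> carrier_mat (dim_row ?M) (dim_row ?M) \<and> ?M * B' = 1\<^sub>m (dim_row ?M) \<and> B' * ?M = 1\<^sub>m (dim_row ?M)"
    then have B': "B' \<in> carrier_mat k k" "?M * B' = 1\<^sub>m k" "B' * ?M = 1\<^sub>m k" using Mcar by auto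
    have "B' = B' * (?M * B)" unfolding B(3) using B'(1) by simp
    also have "\<dots> = (B' * ?M) * B" using B'(1) Mcar B(1) by (rule assoc_mult_mat[symmetric])
    also have "\<dots> = B" unfolding B'(3) using B(1) by simp
    finally show "B' = B" .
  qed
  note Mc' = Mc[folded Ct]
  have Mk: "circ_mat k m0 \<in> carrier_mat k k" by simp
  have Ctk: "circ_mat k ct0 \<in> carrier_mat k k" by simp
  have B2: "B * circ_mat k m0 = 1\<^sub>m k" "circ_mat k m0 * B = 1\<^sub>m k" using B unfolding Mc by auto
  have Wk: "circ_mat k w \<in> carrier_mat k k" by simp
  have Dk: "circ_mat k (\<lambda>m. - dd n m) \<in> carrier_mat k k" by simp
  have BCk: "B * circ_mat k ct0 \<in> carrier_mat k k" using B(1) Ctk by simp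
  have BMk: "B * circ_mat k m0 \<in> carrier_mat k k" using B(1) Mk by simp
  have BC: "circ_mat k ct0 * B = B * circ_mat k ct0"
  proof -
    have "B * circ_mat k ct0 = B * circ_mat k ct0 * (circ_mat k m0 * B)" unfolding B2(2) using BCk by simp
    also have "\<dots> = B * circ_mat k ct0 * circ_mat k m0 * B" by (rule assoc_mult_mat[symmetric, OF BCk Mk B(1)])
    also have "\<dots> = B * (circ_mat k ct0 * circ_mat k m0) * B" unfolding assoc_mult_mat[OF B(1) Ctk Mk] ..
    also have "\<dots> = B * (circ_mat k m0 * circ_mat k ct0) * B" unfolding comm ..
    also have "\<dots> = B * circ_mat k m0 * circ_mat k ct0 * B" unfolding assoc_mult_mat[OF B(1) Mk Ctk] ..
    also have "\<dots> = circ_mat k ct0 * B" unfolding B2(1) using Ctk by simp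
    finally show ?thesis by simp
  qed
  have Xe0: "X = mat_inv ?M * (ones_mat k - real n \<cdot>\<^sub>m 1\<^sub>m k)" unfolding X_def k_def ..
  have Xe: "X = B * circ_mat k w" unfolding Xe0 inv Wc ..
  have "transpose_mat C * X = circ_mat k ct0 * (B * circ_mat k w)" unfolding Xe Ct ..
  also have "\<dots> = (circ_mat k ct0 * B) * circ_mat k w" by (rule assoc_mult_mat[symmetric, OF Ctk B(1) Wk])
  also have "\<dots> = B * (circ_mat k ct0 * circ_mat k w)" unfolding BC by (rule assoc_mult_mat[OF B(1) Ctk Wk])
  also have "\<dots> = B * (circ_mat k m0 * circ_mat k (\<lambda>m. - dd n m))" unfolding CtW MD ..
  also have "\<dots> = (B * circ_mat k m0) * circ_mat k (\<lambda>m. - dd n m)" by (rule assoc_mult_mat[symmetric, OF B(1) Mk Dk])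
  also have "\<dots> = circ_mat k (\<lambda>m. - dd n m)" unfolding B2 by simp
  finally have T: "transpose_mat C * X = circ_mat k (\<lambda>m. - dd n m)" .
  have "Y = - circ_mat k (\<lambda>m. - dd n m)" unfolding Y_def T ..
  also have "\<dots> = circ_mat k (\<lambda>m. - (- dd n m))" by (rule circ_uminus)
  finally have "Y = circ_mat k (\<lambda>m. - (- dd n m))" .
  then show ?thesis unfolding dd k_def by simp
qed

end
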